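(* Let $d\ge 3$ and let $\overrightarrow{F}\in\mathcal{D}'(\mathbb{R}^d)^d$ satisfy, for some $C>0$ and all $u,v\in\mathcal{D}(\mathbb{R}^d)$, \[ \big|\langle\overrightarrow{F},\,v\nabla\overline{u}-\overline{u}\nabla v\rangle\big|\le C\|u\|_{\dot H^{1}}\|v\|_{\dot H^{1}}. \] Let $f=\Delta^{-1}\operatorname{div}\overrightarrow{F}$. Then $\Delta f\in\mathcal{M}(\dot H^{1}\to\dot H^{-1})$.
   Context: $\|u\|_{\dot H^1}=\|\nabla u\|_{L^2(\mathbb{R}^d)}$, $\dot H^1$ is the completion of $\mathcal{D}(\mathbb{R}^d)$ in this norm and $\dot H^{-1}$ is its dual. $\mathcal{M}(\dot H^1\to\dot H^{-1})$ denotes the class of multipliers from $\dot H^1$ to $\dot H^{-1}$: distributions $g$ for which there is a constant $K$ with $|\langle g u,v\rangle|\le K\|u\|_{\dot H^1}\|v\|_{\dot H^1}$ for all $u,v\in\mathcal{D}(\mathbb{R}^d)$. *)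

theory Defs
  imports "HOL-Analysis.Analysis"
begin

text \<open>Complex-valued functions on R^d, with R^d rendered as real^'n (d = CARD('n)).\<close>

definition pd :: "'n::finite \<Rightarrow> (real^'n \<Rightarrow> complex) \<Rightarrow> real^'n \<Rightarrow> complex" where
  "pd i \<phi> x = vector_derivative (\<lambda>t. \<phi> (x + t *\<^sub>R axis i 1)) (at 0)"

fun iter_pd :: "'n::finite list \<Rightarrow> (real^'n \<Rightarrow> complex) \<Rightarrow> real^'n \<Rightarrow> complex" where
  "iter_pd [] \<phi> = \<phi>"
| "iter_pd (i # is) \<phi> = pd i (iter_pd is \<phi>)"

definition smooth_fun :: "(real^'n::finite \<Rightarrow> complex) \<Rightarrow> bool" where
  "smooth_fun \<phi> \<longleftrightarrow> (\<forall>is x. iter_pd is \<phi> differentiable (at x))"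

definition supp :: "(real^'n::finite \<Rightarrow> complex) \<Rightarrow> (real^'n) set" where
  "supp \<phi> = closure {x. \<phi> x \<noteq> 0}"

definition test_fun :: "(real^'n::finite \<Rightarrow> complex) \<Rightarrow> bool" where
  "test_fun \<phi> \<longleftrightarrow> smooth_fun \<phi> \<and> compact (supp \<phi>)"

definition distribution :: "((real^'n::finite \<Rightarrow> complex) \<Rightarrow> complex) \<Rightarrow> bool" where
  "distribution T \<longleftrightarrow>
     (\<forall>\<phi> \<psi>. test_fun \<phi> \<longrightarrow> test_fun \<psi> \<longrightarrow> T (\<lambda>x. \<phi> x + \<psi> x) = T \<phi> + T \<psi>) \<and>
     (\<forall>\<phi> c. test_fun \<phi> \<longrightarrow> T (\<lambda>x. c * \<phi> x) = c * T \<phi>) \<and>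
     (\<forall>K. compact K \<longrightarrow> (\<exists>C N. \<forall>\<phi>. test_fun \<phi> \<longrightarrow> supp \<phi> \<subseteq> K \<longrightarrow>
          cmod (T \<phi>) \<le> C * (\<Sum>is\<in>{is::'n list. length is \<le> N}. (SUP x. cmod (iter_pd is \<phi> x)))))"

definition lap :: "(real^'n::finite \<Rightarrow> complex) \<Rightarrow> real^'n \<Rightarrow> complex" where
  "lap \<phi> x = (\<Sum>i\<in>UNIV. pd i (pd i \<phi>) x)"

definition dist_div :: "('n::finite \<Rightarrow> ((real^'n \<Rightarrow> complex) \<Rightarrow> complex)) \<Rightarrow> (real^'n \<Rightarrow> complex) \<Rightarrow> complex" where
  "dist_div F \<phi> = - (\<Sum>i\<in>UNIV. F i (pd i \<phi>))"

definition dist_lap :: "((real^'n::finite \<Rightarrow> complex) \<Rightarrow> complex) \<Rightarrow> (real^'n \<Rightarrow> complex) \<Rightarrow> complex" where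
  "dist_lap T \<phi> = T (lap \<phi>)"

definition H1_norm :: "(real^'n::finite \<Rightarrow> complex) \<Rightarrow> real" where
  "H1_norm u = sqrt (integral\<^sup>L lborel (\<lambda>x. \<Sum>i\<in>UNIV. (cmod (pd i u x))^2))"

text \<open>Multipliers M(H^1-dot -> H^-1-dot): |<g u, v>| = |g(u v)| <= K ||u|| ||v||.\<close>
definition multiplier_H1 :: "((real^'n::finite \<Rightarrow> complex) \<Rightarrow> complex) \<Rightarrow> bool" where
  "multiplier_H1 g \<longleftrightarrow> (\<exists>K. \<forall>u v. test_fun u \<longrightarrow> test_fun v \<longrightarrow>
       cmod (g (\<lambda>x. u x * v x)) \<le> K * H1_norm u * H1_norm v)"

end

theory Submission
  imports Defs "HOL-Computational_Algebra.Polynomial"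
begin

lemma pd_has_derivative:
  assumes "(f has_derivative f') (at x)"
  shows "pd i f x = f' (axis i 1)"
proof -
  have l: "linear f'" using assms has_derivative_linear by blast
  have "((\<lambda>t::real. x + t *\<^sub>R axis i 1) has_derivative (\<lambda>t. t *\<^sub>R axis i 1)) (at 0)"
    by (auto intro!: derivative_eq_intros)
  moreover have "(f has_derivative f') (at (x + (0::real) *\<^sub>R axis i 1))" using assms by simp
  ultimately have "((\<lambda>t. f (x + t *\<^sub>R axis i 1)) has_derivative (\<lambda>t. f' (t *\<^sub>R axis i 1))) (at 0)"
    using has_derivative_compose[of "\<lambda>t::real. x + t *\<^sub>R axis i 1" _ 0 UNIV f f'] by (simp add: o_def)
  moreover have "(\<lambda>t. f' (t *\<^sub>R axis i 1)) = (\<lambda>t. t *\<^sub>R f' (axis i 1))"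
    using l by (simp add: linear_scale)
  ultimately have "((\<lambda>t. f (x + t *\<^sub>R axis i 1)) has_vector_derivative f' (axis i 1)) (at 0)"
    by (simp add: has_vector_derivative_def)
  then show ?thesis unfolding pd_def by (rule vector_derivative_at)
qed

lemma diff_hasD: "f differentiable (at x) \<Longrightarrow> (f has_derivative frechet_derivative f (at x)) (at x)"
  using frechet_derivative_works by blast

lemma pd_frechet: "f differentiable (at x) \<Longrightarrow> pd i f x = frechet_derivative f (at x) (axis i 1)"
  using diff_hasD pd_has_derivative by blast

lemma pd_add:
  assumes "f differentiable (at x)" "g differentiable (at x)"
  shows "pd i (\<lambda>x. f x + g x) x = pd i f x + pd i g x"
proof -
  have "((\<lambda>x. f x + g x) has_derivative (\<lambda>v. frechet_derivative f (at x) v + frechet_derivative g (at x) v)) (at x)"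
    using diff_hasD[OF assms(1)] diff_hasD[OF assms(2)] by (rule has_derivative_add)
  then show ?thesis using pd_frechet[OF assms(1)] pd_frechet[OF assms(2)] pd_has_derivative by simp
qed

lemma pd_mult:
  assumes "f differentiable (at x)" "g differentiable (at x)"
  shows "pd i (\<lambda>x. f x * g x) x = f x * pd i g x + pd i f x * g x"
proof -
  have "((\<lambda>x. f x * g x) has_derivative (\<lambda>v. f x * frechet_derivative g (at x) v + frechet_derivative f (at x) v * g x)) (at x)"
    using diff_hasD[OF assms(1)] diff_hasD[OF assms(2)] by (rule has_derivative_mult)
  then show ?thesis using pd_frechet[OF assms(1)] pd_frechet[OF assms(2)] pd_has_derivative by simp
qed

lemma pd_const: "pd i (\<lambda>x. c) x = 0"
proof -
  have "((\<lambda>x. c) has_derivative (\<lambda>_. 0)) (at x)" by (rule has_derivative_const)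
  then show ?thesis by (rule pd_has_derivative)
qed

lemma pd_coord: "pd i (\<lambda>x. complex_of_real (x $ j)) x = complex_of_real (axis i 1 $ j)"
proof -
  have "((\<lambda>x. x $ j) has_derivative (\<lambda>v. v $ j)) (at x)"
    by (rule bounded_linear_imp_has_derivative) (rule bounded_linear_vec_nth)
  then have "((\<lambda>x. complex_of_real (x $ j)) has_derivative (\<lambda>v. complex_of_real (v $ j))) (at x)"
    by (auto intro!: derivative_eq_intros)
  then show ?thesis by (rule pd_has_derivative)
qed

lemma pd_re:
  assumes "f differentiable (at x)"
  shows "pd i (\<lambda>x. complex_of_real (Re (f x))) x = complex_of_real (Re (pd i f x))"
proof -
  have "((\<lambda>x. complex_of_real (Re (f x))) has_derivative (\<lambda>v. complex_of_real (Re (frechet_derivative f (at x) v)))) (at x)"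
    using diff_hasD[OF assms(1)] by (auto intro!: derivative_eq_intros)
  then show ?thesis using pd_frechet[OF assms(1)] pd_has_derivative by simp
qed

lemma pd_holo:
  assumes "f differentiable (at x)" "(h has_field_derivative h') (at (f x))"
  shows "pd i (\<lambda>x. h (f x)) x = h' * pd i f x"
proof -
  have "((\<lambda>x. h (f x)) has_derivative (\<lambda>v. h' * frechet_derivative f (at x) v)) (at x)"
    using has_derivative_compose[OF diff_hasD[OF assms(1)] assms(2)[unfolded has_field_derivative_def]]
    by (simp add: o_def)
  then show ?thesis using pd_frechet[OF assms(1)] pd_has_derivative by simp
qed

lemma pd_rfun:
  assumes "f differentiable (at x)" "(h has_real_derivative h') (at (Re (f x)))"
  shows "pd i (\<lambda>x. complex_of_real (h (Re (f x)))) x = complex_of_real h' * complex_of_real (Re (pd i f x))"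
proof -
  have 1: "((\<lambda>x. Re (f x)) has_derivative (\<lambda>v. Re (frechet_derivative f (at x) v))) (at x)"
    using diff_hasD[OF assms(1)] by (auto intro!: derivative_eq_intros)
  have "((\<lambda>x. h (Re (f x))) has_derivative (\<lambda>v. h' * Re (frechet_derivative f (at x) v))) (at x)"
    using has_derivative_compose[OF 1 assms(2)[unfolded has_field_derivative_def]]
    by (simp add: o_def)
  then have "((\<lambda>x. complex_of_real (h (Re (f x)))) has_derivative (\<lambda>v. complex_of_real (h' * Re (frechet_derivative f (at x) v)))) (at x)"
    by (auto intro!: derivative_eq_intros)
  then show ?thesis using pd_frechet[OF assms(1)] pd_has_derivative by simp
qed

lemma iter_pd_snoc: "iter_pd (is @ [i]) f = iter_pd is (pd i f)"
  by (induction "is") auto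

lemma smooth_pd: "smooth_fun f \<Longrightarrow> smooth_fun (pd i f)"
  unfolding smooth_fun_def by (metis iter_pd_snoc)

lemma smooth_diff: "smooth_fun f \<Longrightarrow> f differentiable (at x)"
  unfolding smooth_fun_def by (metis iter_pd.simps(1))

inductive S :: "(real^'n::finite \<Rightarrow> complex) \<Rightarrow> bool" where
  base: "smooth_fun f \<Longrightarrow> S f"
| const: "S (\<lambda>x. c)"
| coord: "S (\<lambda>x. complex_of_real (x $ j))"
| add: "S f \<Longrightarrow> S g \<Longrightarrow> S (\<lambda>x. f x + g x)"
| mult: "S f \<Longrightarrow> S g \<Longrightarrow> S (\<lambda>x. f x * g x)"
| re: "S f \<Longrightarrow> S (\<lambda>x. complex_of_real (Re (f x)))"
| pw: "S f \<Longrightarrow> (\<forall>x. Im (f x) > 0) \<Longrightarrow> S (\<lambda>x. f x powr w)"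
| inv: "S f \<Longrightarrow> (\<forall>x. f x \<noteq> 0) \<Longrightarrow> S (\<lambda>x. inverse (f x))"
| rfun: "S f \<Longrightarrow> (\<forall>k t. (deriv ^^ k) h differentiable (at t)) \<Longrightarrow> S (\<lambda>x. complex_of_real (h (Re (f x))))"

lemma Im_pos_nonpos: "Im z > 0 \<Longrightarrow> z \<notin> \<real>\<^sub>\<le>\<^sub>0"
  by (auto simp: nonpos_Reals_def complex_is_Real_iff)

lemma S_main: "S f \<Longrightarrow> (\<forall>x. f differentiable (at x)) \<and> (\<forall>i. S (pd i f))"
proof (induction rule: S.induct)
  case (base f)
  then show ?case using smooth_pd smooth_diff S.base by blast
next
  case (const c)
  have e: "pd i (\<lambda>x. c) = (\<lambda>x. 0)" for i by (rule ext) (rule pd_const)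
  show ?case
  proof (intro conjI allI)
    show "(\<lambda>x. c) differentiable (at x)" for x by simp
    show "S (pd i (\<lambda>x. c))" for i unfolding e by (rule S.const)
  qed
next
  case (coord j)
  have "pd i (\<lambda>x. complex_of_real (x $ j)) = (\<lambda>x. complex_of_real (axis i 1 $ j))" for i
    by (rule ext) (rule pd_coord)
  moreover have "(\<lambda>x::real^'a. complex_of_real (x $ j)) differentiable (at x)" for x
  proof -
    have "((\<lambda>x::real^'a. x $ j) has_derivative (\<lambda>v. v $ j)) (at x)"
      by (rule bounded_linear_imp_has_derivative) (rule bounded_linear_vec_nth)
    then have "((\<lambda>x::real^'a. complex_of_real (x $ j)) has_derivative (\<lambda>v. complex_of_real (v $ j))) (at x)"
      by (auto intro!: derivative_eq_intros)
    then show ?thesis by (rule differentiableI)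
  qed
  ultimately show ?case by (auto intro: S.const)
next
  case (add f g)
  have "pd i (\<lambda>x. f x + g x) = (\<lambda>x. pd i f x + pd i g x)" for i
    by (rule ext) (use add pd_add in blast)
  then show ?case using add by (auto intro!: S.add)
next
  case (mult f g)
  have "pd i (\<lambda>x. f x * g x) = (\<lambda>x. f x * pd i g x + pd i f x * g x)" for i
    by (rule ext) (use mult pd_mult in blast)
  then show ?case using mult by (auto intro!: S.add S.mult)
next
  case (re f)
  have "pd i (\<lambda>x. complex_of_real (Re (f x))) = (\<lambda>x. complex_of_real (Re (pd i f x)))" for i
    by (rule ext) (use re pd_re in blast)
  moreover have "(\<lambda>x. complex_of_real (Re (f x))) differentiable (at x)" for x
  proof -
    have "(\<lambda>x. complex_of_real (Re (f x))) = (\<lambda>x. complex_of_real (Re x)) \<circ> f" by auto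
    moreover have "(\<lambda>x. complex_of_real (Re x)) differentiable (at (f x))"
      by (rule bounded_linear_imp_differentiable) (rule bounded_linear_compose[OF bounded_linear_of_real bounded_linear_Re])
    ultimately show ?thesis using re differentiable_chain_at by metis
  qed
  ultimately show ?case using re by (auto intro!: S.re)
next
  case (pw f w)
  have d: "((\<lambda>z. z powr w) has_field_derivative (w * f x powr (w - 1))) (at (f x))" for x
    using has_field_derivative_powr Im_pos_nonpos pw by blast
  have "pd i (\<lambda>x. f x powr w) = (\<lambda>x. (w * f x powr (w - 1)) * pd i f x)" for i
    by (rule ext) (use pw d pd_holo in blast)
  moreover have "(\<lambda>x. f x powr w) differentiable (at x)" for x
    using differentiable_compose[of "\<lambda>z. z powr w" f x UNIV] d pw
    by (metis field_differentiable_def field_differentiable_imp_differentiable)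
  ultimately show ?case using pw by (auto intro!: S.mult S.const S.pw)
next
  case (inv f)
  have d: "(inverse has_field_derivative (- (inverse (f x) * inverse (f x)))) (at (f x))" for x
    using inv DERIV_inverse[of "f x"] by (simp add: power2_eq_square)
  have e: "pd i (\<lambda>x. inverse (f x)) = (\<lambda>x. (- (inverse (f x) * inverse (f x))) * pd i f x)" for i
    by (rule ext) (use inv d pd_holo in blast)
  have dd: "(\<lambda>x. inverse (f x)) differentiable (at x)" for x
    using differentiable_compose[of inverse f x UNIV] d inv
    by (metis field_differentiable_def field_differentiable_imp_differentiable)
  have s1: "S (\<lambda>x. - (inverse (f x) * inverse (f x)))"
  proof -
    have "S (\<lambda>x. (-1) * (inverse (f x) * inverse (f x)))"
      using inv S.mult S.const S.inv by blast
    then show ?thesis by simp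
  qed
  show ?case
  proof (intro conjI allI)
    show "(\<lambda>x. inverse (f x)) differentiable (at x)" for x by (rule dd)
    show "S (pd i (\<lambda>x. inverse (f x)))" for i
      unfolding e using S.mult[OF s1] inv by blast
  qed
next
  case (rfun f h)
  have dh: "(h has_real_derivative deriv h t) (at t)" for t
    using rfun(2) DERIV_deriv_iff_real_differentiable by (metis funpow_0)
  have "pd i (\<lambda>x. complex_of_real (h (Re (f x)))) = (\<lambda>x. complex_of_real (deriv h (Re (f x))) * complex_of_real (Re (pd i f x)))" for i
    by (rule ext) (use rfun dh pd_rfun in blast)
  moreover have "(\<lambda>x. complex_of_real (h (Re (f x)))) differentiable (at x)" for x
  proof -
    have "(\<lambda>x. Re (f x)) differentiable (at x)"
      using differentiable_compose[of Re f x UNIV] rfun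
      by (metis bounded_linear_Re bounded_linear_imp_differentiable)
    then have "(\<lambda>x. h (Re (f x))) differentiable (at x)"
      using differentiable_compose[of h "\<lambda>x. Re (f x)" x UNIV] dh
      by (metis real_differentiable_def differentiableI)
    then show ?thesis
      using differentiable_compose[of complex_of_real "\<lambda>x. h (Re (f x))" x UNIV]
      by (metis bounded_linear_of_real bounded_linear_imp_differentiable)
  qed
  moreover have "\<forall>k t. (deriv ^^ k) (deriv h) differentiable (at t)"
    using rfun(2) by (metis funpow_Suc_right o_apply)
  ultimately show ?case using rfun by (auto intro!: S.mult S.re S.rfun)
qed

lemma S_smooth:
  fixes f :: "real^'n::finite \<Rightarrow> complex"
  shows "S f \<Longrightarrow> smooth_fun f"
proof -
  have "\<forall>f :: real^'n \<Rightarrow> complex. S f \<longrightarrow> (\<forall>x. iter_pd is f differentiable (at x)) \<and> S (iter_pd is f)" for "is"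
  proof (induction "is")
    case Nil then show ?case using S_main by auto
  next
    case (Cons i "is")
    show ?case
    proof (intro allI impI)
      fix f :: "real^'n \<Rightarrow> complex"
      assume "S f"
      then have "S (iter_pd is f)" using Cons.IH by blast
      then have "S (pd i (iter_pd is f))" using S_main by blast
      with S_main[OF this] show "(\<forall>x. iter_pd (i # is) f differentiable (at x)) \<and> S (iter_pd (i # is) f)"
        using S_main by simp
    qed
  qed
  then show "S f \<Longrightarrow> smooth_fun f" unfolding smooth_fun_def by blast
qed

lemma closed_supp: "closed (supp f)" unfolding supp_def by simp

lemma notin_supp: "x \<notin> supp f \<Longrightarrow> f x = 0"
  unfolding supp_def using closure_subset[of "{x. f x \<noteq> 0}"] by auto

lemma in_supp: "f x \<noteq> 0 \<Longrightarrow> x \<in> supp f"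
  using notin_supp by metis

lemma supp_sub: "(\<And>x. f x \<noteq> 0 \<Longrightarrow> x \<in> K) \<Longrightarrow> closed K \<Longrightarrow> supp f \<subseteq> K"
  unfolding supp_def by (rule closure_minimal) auto

lemma compact_sub: "compact K \<Longrightarrow> closed T \<Longrightarrow> T \<subseteq> K \<Longrightarrow> compact T"
  using compact_Int_closed[of K T] by (simp add: Int_absorb1)

lemma pd_notin_supp:
  assumes "x \<notin> supp f"
  shows "pd i f x = 0"
proof -
  have o: "open ((\<lambda>t::real. x + t *\<^sub>R axis i 1) -` (- supp f))"
    apply (rule continuous_open_vimage)
    using closed_supp apply blast
    apply (auto intro!: continuous_intros)
    done
  have m: "0 \<in> (\<lambda>t::real. x + t *\<^sub>R axis i 1) -` (- supp f)" using assms by simp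
  have d: "((\<lambda>t. 0::complex) has_vector_derivative 0) (at 0)" by (rule has_vector_derivative_const)
  from d o m have "((\<lambda>t. f (x + t *\<^sub>R axis i 1)) has_vector_derivative 0) (at 0)"
  proof (rule has_vector_derivative_transform_within_open)
    fix y assume "y \<in> (\<lambda>t::real. x + t *\<^sub>R axis i 1) -` (- supp f)"
    then have "x + y *\<^sub>R axis i 1 \<notin> supp f" by simp
    then show "0 = f (x + y *\<^sub>R axis i 1)" by (simp add: notin_supp)
  qed
  then show ?thesis unfolding pd_def by (rule vector_derivative_at)
qed

lemma supp_pd: "supp (pd i f) \<subseteq> supp f"
  by (rule supp_sub) (use pd_notin_supp in \<open>auto simp: closed_supp\<close>)

lemma test_S: "test_fun f \<Longrightarrow> S f"
  unfolding test_fun_def by (auto intro: S.base)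

lemma S_test: "S f \<Longrightarrow> compact (supp f) \<Longrightarrow> test_fun f"
  unfolding test_fun_def using S_smooth by blast

lemma test_diff: "test_fun f \<Longrightarrow> f differentiable (at x)"
  using test_S S_main by blast

lemma test_pd:
  assumes "test_fun f" shows "test_fun (pd i f)"
proof -
  have "S (pd i f)" using S_main[OF test_S[OF assms]] by blast
  moreover have "compact (supp (pd i f))"
    using compact_sub[OF _ closed_supp supp_pd] assms unfolding test_fun_def by blast
  ultimately show ?thesis by (rule S_test)
qed

lemma S_sum: "finite A \<Longrightarrow> (\<forall>a\<in>A. S (f a)) \<Longrightarrow> S (\<lambda>x. \<Sum>a\<in>A. f a x)"
proof (induction A rule: finite_induct)
  case empty then show ?case using S.const[of 0] by simp
next
  case (insert a A) then show ?case using S.add[of "f a" "\<lambda>x. \<Sum>a\<in>A. f a x"] by simp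
qed

definition gp :: "real poly \<Rightarrow> real \<Rightarrow> real" where
  "gp p t = (if t > 0 then poly p (1/t) * exp (- (1/t)) else 0)"

definition nextp :: "real poly \<Rightarrow> real poly" where
  "nextp p = monom 1 2 * (p - pderiv p)"

lemma poly_exp_lim: "((\<lambda>s. poly (r::real poly) s * exp (- s)) \<longlongrightarrow> 0) at_top"
proof -
  have e: "poly r s * exp (- s) = (\<Sum>i\<le>degree r. coeff r i * (s ^ i / exp s))" for s
    by (simp add: poly_altdef exp_minus divide_inverse sum_distrib_right mult.assoc)
  have "((\<lambda>s. \<Sum>i\<le>degree r. coeff r i * (s ^ i / exp s)) \<longlongrightarrow> 0) at_top"
    by (intro tendsto_null_sum tendsto_mult_right_zero tendsto_power_div_exp_0)
  then show ?thesis by (simp only: e)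
qed

lemma gp_deriv: "(gp p has_real_derivative gp (nextp p) t) (at t)"
proof (cases "t > 0")
  case True
  have d: "((\<lambda>t. poly p (1/t) * exp (- (1/t))) has_real_derivative
      (poly (pderiv p) (1/t) * (- (1 / t^2)) * exp (- (1/t)) + poly p (1/t) * (exp (- (1/t)) * (1/t^2)))) (at t)"
    using True
    by (auto intro!: derivative_eq_intros DERIV_chain2[OF poly_DERIV] simp: power2_eq_square field_simps)
  have v: "poly (pderiv p) (1/t) * (- (1 / t^2)) * exp (- (1/t)) + poly p (1/t) * (exp (- (1/t)) * (1/t^2))
      = gp (nextp p) t"
    using True by (simp add: gp_def nextp_def poly_monom field_simps)
  show ?thesis
    by (rule has_field_derivative_transform_within_open[of _ _ _ "{0<..}"])
       (use d v True in \<open>auto simp: gp_def\<close>)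
next
  case False
  show ?thesis
  proof (cases "t < 0")
    case True
    have "((\<lambda>t. 0) has_real_derivative 0) (at t)" by simp
    moreover have "gp (nextp p) t = 0" using True by (simp add: gp_def)
    ultimately have "((\<lambda>t. 0) has_real_derivative gp (nextp p) t) (at t)" by simp
    then show ?thesis
      by (rule has_field_derivative_transform_within_open[of _ _ _ "{..<0}"])
         (use True in \<open>auto simp: gp_def\<close>)
  next
    case False
    with \<open>\<not> t > 0\<close> have t0: "t = 0" by simp
    have l: "((\<lambda>h. (gp p (0 + h) - gp p 0) / h) \<longlongrightarrow> 0) (at_left 0)"
    proof -
      have "eventually (\<lambda>h. (gp p (0 + h) - gp p 0) / h = 0) (at_left (0::real))"
      proof -
        have ev: "eventually (\<lambda>x. x \<in> {-1<..<0}) (at_left (0::real))"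
          by (rule eventually_at_left_real) simp
        then show ?thesis by eventually_elim (auto simp: gp_def)
      qed
      then show ?thesis by (rule tendsto_eventually)
    qed
    have r: "((\<lambda>h. (gp p (0 + h) - gp p 0) / h) \<longlongrightarrow> 0) (at_right 0)"
    proof -
      have "((\<lambda>s. poly (pCons 0 p) s * exp (- s)) \<longlongrightarrow> 0) at_top" by (rule poly_exp_lim)
      then have "((\<lambda>h. poly (pCons 0 p) (inverse h) * exp (- inverse h)) \<longlongrightarrow> 0) (at_right 0)"
        using filterlim_compose[OF _ filterlim_inverse_at_top_right] by blast
      moreover have "eventually (\<lambda>h. poly (pCons 0 p) (inverse h) * exp (- inverse h) = (gp p (0 + h) - gp p 0) / h) (at_right (0::real))"
        using eventually_at_right_less[of "0::real"] by eventually_elim (auto simp: gp_def field_simps)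
      ultimately show ?thesis by (rule Lim_transform_eventually)
    qed
    have "((\<lambda>h. (gp p (0 + h) - gp p 0) / h) \<longlongrightarrow> 0) (at 0)"
      using l r filterlim_at_split by blast
    then have "(gp p has_real_derivative 0) (at 0)" by (simp add: DERIV_def)
    then show ?thesis using t0 by (simp add: gp_def)
  qed
qed

lemma gp_deriv_eq: "deriv (gp p) = gp (nextp p)"
  using gp_deriv DERIV_imp_deriv by blast

lemma gp_iter: "\<forall>p. \<exists>q. (deriv ^^ k) (gp p) = gp q"
proof (induction k)
  case 0 then show ?case by auto
next
  case (Suc k)
  show ?case
  proof
    fix p
    have "(deriv ^^ Suc k) (gp p) = (deriv ^^ k) (gp (nextp p))"
      by (simp only: funpow_Suc_right o_apply gp_deriv_eq)
    then show "\<exists>q. (deriv ^^ Suc k) (gp p) = gp q" using Suc by metis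
  qed
qed

lemma gp_smooth: "\<forall>k t. (deriv ^^ k) (gp p) differentiable (at t)"
proof (intro allI)
  fix k t
  obtain q where "(deriv ^^ k) (gp p) = gp q" using gp_iter by blast
  moreover have "gp q differentiable (at t)"
    using gp_deriv[of q t] field_differentiable_imp_differentiable field_differentiable_def by blast
  ultimately show "(deriv ^^ k) (gp p) differentiable (at t)" by simp
qed

lemma gp_one: "gp 1 t = (if t > 0 then exp (- (1/t)) else 0)"
  by (simp add: gp_def)

definition Nf :: "real^'n::finite \<Rightarrow> complex" where
  "Nf x = (\<Sum>j\<in>UNIV. complex_of_real (x $ j) * complex_of_real (x $ j))"

lemma S_Nf: "S Nf"
  unfolding Nf_def by (rule S_sum) (auto intro: S.mult S.coord)

lemma Re_Nf: "Re (Nf x) = norm x ^ 2"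
proof -
  have "Re (Nf x) = (\<Sum>j\<in>UNIV. x $ j * x $ j)"
    unfolding Nf_def by (simp add: Re_sum)
  also have "\<dots> = x \<bullet> x" by (simp add: inner_vec_def)
  also have "\<dots> = norm x ^ 2" by (simp add: power2_norm_eq_inner)
  finally show ?thesis .
qed

definition eb :: "real \<Rightarrow> real" where "eb = gp 1"

lemma eb_pos: "t > 0 \<Longrightarrow> eb t > 0" by (simp add: eb_def gp_def)
lemma eb_zero: "t \<le> 0 \<Longrightarrow> eb t = 0" by (simp add: eb_def gp_def)
lemma eb_nonneg: "eb t \<ge> 0" by (simp add: eb_def gp_def)
lemma eb_smooth: "\<forall>k t. (deriv ^^ k) eb differentiable (at t)"
  unfolding eb_def by (rule gp_smooth)

definition bumpf :: "real \<Rightarrow> real^'n::finite \<Rightarrow> complex" where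
  "bumpf R x = complex_of_real (eb (Re (complex_of_real (R + 1) + (-1) * Nf x))) *
     inverse (complex_of_real (eb (Re (complex_of_real (R + 1) + (-1) * Nf x)))
            + complex_of_real (eb (Re (Nf x + complex_of_real (- R)))))"

lemma bumpf_S: "S (bumpf R :: real^'n::finite \<Rightarrow> complex)"
proof -
  have sa: "S (\<lambda>x::real^'n. complex_of_real (R + 1) + (-1) * Nf x)"
    by (intro S.add S.mult S.const S_Nf)
  have sb: "S (\<lambda>x::real^'n. Nf x + complex_of_real (- R))"
    by (intro S.add S.const S_Nf)
  have ea: "S (\<lambda>x::real^'n. complex_of_real (eb (Re (complex_of_real (R + 1) + (-1) * Nf x))))"
    using S.rfun[OF sa eb_smooth] .
  have ebb: "S (\<lambda>x::real^'n. complex_of_real (eb (Re (Nf x + complex_of_real (- R)))))"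
    using S.rfun[OF sb eb_smooth] .
  have nz: "\<forall>x::real^'n. complex_of_real (eb (Re (complex_of_real (R + 1) + (-1) * Nf x)))
            + complex_of_real (eb (Re (Nf x + complex_of_real (- R)))) \<noteq> 0"
  proof
    fix x :: "real^'n"
    let ?a = "R + 1 - norm x ^ 2" and ?b = "norm x ^ 2 - R"
    have "eb ?a + eb ?b > 0"
    proof (cases "?a > 0")
      case True then show ?thesis using eb_pos[of ?a] eb_nonneg[of ?b] by linarith
    next
      case False then have "?b > 0" by linarith
      then show ?thesis using eb_pos[of ?b] eb_nonneg[of ?a] by linarith
    qed
    moreover have "complex_of_real (eb (Re (complex_of_real (R + 1) + (-1) * Nf x)))
            + complex_of_real (eb (Re (Nf x + complex_of_real (- R)))) = complex_of_real (eb ?a + eb ?b)"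
      by (simp add: Re_Nf)
    ultimately show "complex_of_real (eb (Re (complex_of_real (R + 1) + (-1) * Nf x)))
            + complex_of_real (eb (Re (Nf x + complex_of_real (- R)))) \<noteq> 0"
      by (metis of_real_eq_0_iff less_irrefl)
  qed
  show ?thesis unfolding bumpf_def
    by (rule S.mult[OF ea S.inv[OF S.add[OF ea ebb] nz]])
qed

lemma bumpf_one: "norm x ^ 2 \<le> R \<Longrightarrow> bumpf R x = 1"
proof -
  assume h: "norm x ^ 2 \<le> R"
  have "eb (R + 1 - norm x ^ 2) > 0" using h by (intro eb_pos) linarith
  moreover have "eb (norm x ^ 2 - R) = 0" using h by (intro eb_zero) linarith
  ultimately show ?thesis by (simp add: bumpf_def Re_Nf)
qed

lemma bumpf_zero: "norm x ^ 2 \<ge> R + 1 \<Longrightarrow> bumpf R x = 0"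
proof -
  assume h: "norm x ^ 2 \<ge> R + 1"
  have "eb (R + 1 - norm x ^ 2) = 0" using h by (intro eb_zero) linarith
  then show ?thesis by (simp add: bumpf_def Re_Nf)
qed

lemma bumpf_test: "R \<ge> 0 \<Longrightarrow> test_fun (bumpf R :: real^'n::finite \<Rightarrow> complex)"
proof -
  assume R: "R \<ge> 0"
  have "supp (bumpf R :: real^'n \<Rightarrow> complex) \<subseteq> cball 0 (sqrt (R + 1))"
  proof (rule supp_sub)
    fix x :: "real^'n" assume "bumpf R x \<noteq> 0"
    then have "norm x ^ 2 < R + 1" using bumpf_zero[of R x] by fastforce
    then have "norm x < sqrt (R + 1)" using real_less_rsqrt by blast
    then show "x \<in> cball 0 (sqrt (R + 1))" by simp
  qed simp
  then have "compact (supp (bumpf R :: real^'n \<Rightarrow> complex))"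
    using compact_sub[OF compact_cball closed_supp] by blast
  then show ?thesis using S_test bumpf_S by blast
qed

lemma bump_exists:
  fixes K :: "(real^'n::finite) set"
  assumes "compact K"
  shows "\<exists>\<eta>. test_fun \<eta> \<and> (\<forall>x\<in>K. \<eta> x = 1)"
proof -
  obtain B where B: "\<forall>x\<in>K. norm x \<le> B"
    using compact_imp_bounded[OF assms] bounded_iff by blast
  let ?R = "(max B 0)^2"
  have "\<forall>x\<in>K. bumpf ?R x = 1"
  proof
    fix x assume "x \<in> K"
    then have "norm x \<le> max B 0" using B by force
    then have "norm x ^ 2 \<le> ?R" by (intro power_mono) auto
    then show "bumpf ?R x = 1" by (rule bumpf_one)
  qed
  moreover have "test_fun (bumpf ?R :: real^'n \<Rightarrow> complex)" by (rule bumpf_test) simp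
  ultimately show ?thesis by blast
qed

definition Hd :: "(real^'n::finite \<Rightarrow> complex) \<Rightarrow> real^'n \<Rightarrow> real" where
  "Hd f x = (\<Sum>i\<in>UNIV. (cmod (pd i f x))^2)"

lemma H1_Hd: "H1_norm f = sqrt (integral\<^sup>L lborel (Hd f))"
  unfolding H1_norm_def Hd_def by simp

lemma Hd_nonneg: "Hd f x \<ge> 0" unfolding Hd_def by (simp add: sum_nonneg)

lemma test_cont_pd: "test_fun f \<Longrightarrow> continuous_on UNIV (pd i f)"
  by (intro continuous_at_imp_continuous_on ballI differentiable_imp_continuous_within test_diff test_pd)

lemma Hd_integrable:
  assumes "test_fun f"
  shows "integrable lborel (Hd f)"
proof -
  let ?K = "supp f"
  have K: "compact ?K" using assms unfolding test_fun_def by blast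
  have "continuous_on ?K (Hd f)"
    unfolding Hd_def
    by (intro continuous_intros continuous_on_subset[OF test_cont_pd[OF assms]]) auto
  then have "integrable lborel (\<lambda>x. indicator ?K x *\<^sub>R Hd f x)"
    by (rule borel_integrable_compact[OF K])
  moreover have eq: "(\<lambda>x. indicator ?K x *\<^sub>R Hd f x) = Hd f"
    by (rule ext) (auto simp: Hd_def pd_notin_supp indicator_def)
  ultimately show ?thesis by simp
qed

lemma H1_sq: "test_fun f \<Longrightarrow> H1_norm f ^ 2 = integral\<^sup>L lborel (Hd f)"
proof -
  have "integral\<^sup>L lborel (Hd f) \<ge> 0" by (rule Bochner_Integration.integral_nonneg) (rule Hd_nonneg)
  then show ?thesis unfolding H1_Hd by simp
qed

lemma H1_nonneg: "H1_norm f \<ge> 0"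
proof -
  have "integral\<^sup>L lborel (Hd f) \<ge> 0" by (rule Bochner_Integration.integral_nonneg) (rule Hd_nonneg)
  then show ?thesis unfolding H1_Hd by simp
qed

lemma H1_bound:
  assumes "test_fun f" "test_fun g" "test_fun h" "\<alpha> \<ge> 0" "\<beta> \<ge> 0"
    and "\<And>x. Hd f x \<le> \<alpha> * Hd g x + \<beta> * Hd h x"
  shows "H1_norm f ^ 2 \<le> \<alpha> * H1_norm g ^ 2 + \<beta> * H1_norm h ^ 2"
proof -
  have ig: "integrable lborel (\<lambda>x. \<alpha> * Hd g x)" using Hd_integrable[OF assms(2)] by simp
  have ih: "integrable lborel (\<lambda>x. \<beta> * Hd h x)" using Hd_integrable[OF assms(3)] by simp
  have "integral\<^sup>L lborel (Hd f) \<le> integral\<^sup>L lborel (\<lambda>x. \<alpha> * Hd g x + \<beta> * Hd h x)"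
    by (rule integral_mono[OF Hd_integrable[OF assms(1)] Bochner_Integration.integrable_add[OF ig ih]])
       (use assms(6) in auto)
  also have "\<dots> = \<alpha> * integral\<^sup>L lborel (Hd g) + \<beta> * integral\<^sup>L lborel (Hd h)"
    using ig ih Hd_integrable[OF assms(2)] Hd_integrable[OF assms(3)] by simp
  finally show ?thesis using H1_sq[OF assms(1)] H1_sq[OF assms(2)] H1_sq[OF assms(3)] by (simp only:)
qed

lemma H1_bound1:
  assumes "test_fun f" "test_fun g" "\<And>x. Hd f x \<le> Hd g x"
  shows "H1_norm f \<le> H1_norm g"
proof -
  have "H1_norm f ^ 2 \<le> 1 * H1_norm g ^ 2 + 0 * H1_norm g ^ 2"
    by (rule H1_bound[OF assms(1,2,2)]) (use assms(3) in auto)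
  then show ?thesis using H1_nonneg[of f] H1_nonneg[of g] by (simp add: power_mono_iff)
qed

lemma pd_cnj:
  assumes "f differentiable (at x)"
  shows "pd i (\<lambda>x. cnj (f x)) x = cnj (pd i f x)"
proof -
  have "((\<lambda>x. cnj (f x)) has_derivative (\<lambda>v. cnj (frechet_derivative f (at x) v))) (at x)"
    using bounded_linear.has_derivative[OF bounded_linear_cnj diff_hasD[OF assms]] .
  then show ?thesis using pd_frechet[OF assms] pd_has_derivative by simp
qed

lemma pd_cmult:
  assumes "f differentiable (at x)"
  shows "pd i (\<lambda>x. c * f x) x = c * pd i f x"
proof -
  have "pd i (\<lambda>x. c) x = 0" by (rule pd_const)
  then show ?thesis using pd_mult[OF _ assms, of "\<lambda>x. c"] by simp
qed

lemma H1_cnj: 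
  assumes "test_fun f" shows "H1_norm (\<lambda>x. cnj (f x)) = H1_norm f"
proof -
  have e: "pd i (\<lambda>x. cnj (f x)) x = cnj (pd i f x)" for i x
    using pd_cnj test_diff[OF assms] by blast
  show ?thesis unfolding H1_norm_def e by simp
qed

lemma pd_locconst:
  assumes "open U" "x \<in> U" "\<And>y. y \<in> U \<Longrightarrow> f y = c"
  shows "pd i f x = 0"
proof -
  have o: "open ((\<lambda>t::real. x + t *\<^sub>R axis i 1) -` U)"
    apply (rule continuous_open_vimage)
    using assms(1) apply blast
    apply (auto intro!: continuous_intros)
    done
  have m: "0 \<in> (\<lambda>t::real. x + t *\<^sub>R axis i 1) -` U" using assms(2) by simp
  have d: "((\<lambda>t. c) has_vector_derivative 0) (at 0)" by (rule has_vector_derivative_const)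
  from d o m have "((\<lambda>t. f (x + t *\<^sub>R axis i 1)) has_vector_derivative 0) (at 0)"
  proof (rule has_vector_derivative_transform_within_open)
    fix y assume "y \<in> (\<lambda>t::real. x + t *\<^sub>R axis i 1) -` U"
    then have "x + y *\<^sub>R axis i 1 \<in> U" by simp
    then show "c = f (x + y *\<^sub>R axis i 1)" using assms(3) by metis
  qed
  then show ?thesis unfolding pd_def by (rule vector_derivative_at)
qed

lemma open_nonzero:
  assumes "\<And>x. w differentiable (at x)"
  shows "open {x. w x \<noteq> (0::complex)}"
proof -
  have "continuous_on UNIV w"
    using assms by (intro continuous_at_imp_continuous_on ballI differentiable_imp_continuous_within) auto
  then have "open (w -` (- {0}))"
    by (intro continuous_open_vimage) (auto simp: continuous_on_eq_continuous_at)
  moreover have "w -` (- {0}) = {x. w x \<noteq> 0}" by auto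
  ultimately show ?thesis by simp
qed

lemma cmod_powr_le:
  fixes z w :: complex
  assumes "z \<noteq> 0"
  shows "cmod (z powr w) \<le> exp (Re w * ln (cmod z) + \<bar>Im w\<bar> * pi)"
proof -
  have "cmod (z powr w) = exp (Re (w * ln z))" using assms by (simp add: powr_def)
  also have "Re (w * ln z) = Re w * ln (cmod z) - Im w * Im (ln z)" using assms by simp
  also have "\<dots> \<le> Re w * ln (cmod z) + \<bar>Im w\<bar> * pi"
  proof -
    have "\<bar>Im (ln z)\<bar> \<le> pi" using mpi_less_Im_Ln[of z] Im_Ln_le_pi[of z] assms by auto
    then have "\<bar>Im w * Im (ln z)\<bar> \<le> \<bar>Im w\<bar> * pi"
      by (simp add: abs_mult mult_left_mono)
    then show ?thesis by linarith
  qed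
  finally show ?thesis by simp
qed

lemma W_ident:
  fixes z :: complex
  assumes "z \<noteq> 0"
  shows "(- \<i>) * z powr (1 - \<i>) * ((1 + \<i>) * z powr \<i>) - z powr (1 + \<i>) * ((- \<i>) * (1 - \<i>) * z powr (- \<i>)) = 2 * z"
proof -
  have e1: "z powr (1 - \<i>) * z powr \<i> = z"
    using powr_add[of z "1 - \<i>" "\<i>"] assms by simp
  have e2: "z powr (1 + \<i>) * z powr (- \<i>) = z"
    using powr_add[of z "1 + \<i>" "- \<i>"] assms by simp
  have "(- \<i>) * z powr (1 - \<i>) * ((1 + \<i>) * z powr \<i>) - z powr (1 + \<i>) * ((- \<i>) * (1 - \<i>) * z powr (- \<i>))
      = (- \<i>) * (1 + \<i>) * (z powr (1 - \<i>) * z powr \<i>) - (- \<i>) * (1 - \<i>) * (z powr (1 + \<i>) * z powr (- \<i>))"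
    by (simp add: algebra_simps)
  also have "\<dots> = 2 * z" unfolding e1 e2 by (simp add: algebra_simps)
  finally show ?thesis .
qed

lemma test_cnj: "test_fun f \<Longrightarrow> test_fun (\<lambda>x. cnj (f x))"
proof -
  assume t: "test_fun f"
  have "S (\<lambda>x. 2 * complex_of_real (Re (f x)) + (-1) * f x)"
    using test_S[OF t] by (intro S.add S.mult S.const S.re)
  moreover have "(\<lambda>x. 2 * complex_of_real (Re (f x)) + (-1) * f x) = (\<lambda>x. cnj (f x))"
    by (rule ext) (simp add: complex_eq_iff)
  ultimately have "S (\<lambda>x. cnj (f x))" by simp
  moreover have "supp (\<lambda>x. cnj (f x)) = supp f" unfolding supp_def by simp
  ultimately show ?thesis using t S_test unfolding test_fun_def by metis
qed

lemma sq_sum_le: "(cmod (u + v))^2 \<le> 2 * (cmod u)^2 + 2 * (cmod v)^2"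
proof -
  have "cmod (u + v) \<le> cmod u + cmod v" by (rule norm_triangle_ineq)
  then have "(cmod (u + v))^2 \<le> (cmod u + cmod v)^2" by (simp add: power_mono)
  also have "\<dots> \<le> 2 * (cmod u)^2 + 2 * (cmod v)^2"
  proof -
    have h: "0 \<le> (cmod u - cmod v)^2" by simp
    then show ?thesis unfolding power2_sum power2_diff by linarith
  qed
  finally show ?thesis .
qed

lemma eps_limit:
  fixes A B P Q :: real
  assumes "P \<ge> 0" "Q \<ge> 0" "\<And>e. 0 < e \<Longrightarrow> e \<le> 1 \<Longrightarrow> A \<le> B + e * P + e^2 * Q"
  shows "A \<le> B"
proof (rule ccontr)
  assume "\<not> A \<le> B"
  then have d: "A - B > 0" by simp
  define e where "e = min 1 ((A - B) / (P + Q + 1))"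
  have e0: "e > 0" using d assms by (simp add: e_def)
  have e1: "e \<le> 1" by (simp add: e_def)
  have e2: "e \<le> (A - B) / (P + Q + 1)" by (simp add: e_def)
  have "e^2 * Q \<le> e * Q" using e0 e1 assms(2) by (simp add: power2_eq_square mult_right_mono)
  moreover have "e * (P + Q) < A - B"
  proof -
    have "e * (P + Q + 1) \<le> A - B" using e2 assms by (simp add: pos_le_divide_eq)
    then show ?thesis using e0 by (simp add: algebra_simps)
  qed
  moreover have "A \<le> B + e * P + e^2 * Q" using assms(3) e0 e1 by blast
  ultimately show False by (simp add: algebra_simps)
qed

lemma t_opt:
  fixes A K F G :: real
  assumes "K \<ge> 0" "F \<ge> 0" "G \<ge> 0" "\<And>t. t > 0 \<Longrightarrow> A \<le> K * (t^2 * F^2 + G^2 / t^2)"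
  shows "A \<le> 2 * K * F * G"
proof (cases "F > 0 \<and> G > 0")
  case True
  define t where "t = sqrt (G / F)"
  have t0: "t > 0" using True by (simp add: t_def)
  have t2: "t^2 = G / F" using True by (simp add: t_def)
  have "A \<le> K * (t^2 * F^2 + G^2 / t^2)" using assms(4) t0 by blast
  also have "t^2 * F^2 + G^2 / t^2 = 2 * F * G" using True unfolding t2 by (simp add: field_simps power2_eq_square)
  finally show ?thesis by (simp add: algebra_simps)
next
  case False
  then have FG: "F * G = 0" using assms by auto
  show ?thesis
  proof (rule ccontr)
    assume "\<not> A \<le> 2 * K * F * G"
    then have A0: "A > 0" using FG by (simp add: mult.assoc)
    show False
    proof (cases "F = 0")
      case True
      define X where "X = K * G^2"
      have X0: "X \<ge> 0" using assms by (simp add: X_def)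
      define t where "t = sqrt (2 * X / A + 1)"
      have t2: "t^2 = 2 * X / A + 1" using A0 X0 by (simp add: t_def)
      have "2 * X / A \<ge> 0" using A0 X0 by simp
      then have t0: "t > 0" unfolding t_def by simp
      have "A \<le> X / t^2" using assms(4)[OF t0] True by (simp add: X_def)
      also have "X / t^2 < A"
      proof -
        have "A * t^2 = 2 * X + A" unfolding t2 using A0 by (simp add: field_simps)
        then have "X < A * t^2" using X0 A0 by linarith
        then show ?thesis using t0 by (simp add: divide_less_eq mult.commute)
      qed
      finally show False by simp
    next
      case False
      then have G0: "G = 0" using FG by simp
      define Y where "Y = K * F^2"
      have Y0: "Y \<ge> 0" using assms by (simp add: Y_def)
      define t where "t = sqrt (A / (2 * Y + 1))"
      have den: "2 * Y + 1 > 0" using Y0 by simp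
      have t2: "t^2 = A / (2 * Y + 1)" using A0 den by (simp add: t_def)
      have t0: "t > 0" unfolding t_def using A0 den by simp
      have "A \<le> t^2 * Y" using assms(4)[OF t0] G0 by (simp add: Y_def algebra_simps)
      also have "t^2 * Y < t^2 * (2 * Y + 1)"
        using t0 Y0 by (intro mult_strict_left_mono) auto
      also have "t^2 * (2 * Y + 1) = A" unfolding t2 using den by simp
      finally show False by simp
    qed
  qed
qed

definition TT :: "('n::finite \<Rightarrow> ((real^'n \<Rightarrow> complex) \<Rightarrow> complex)) \<Rightarrow> (real^'n \<Rightarrow> complex) \<Rightarrow> complex" where
  "TT F \<phi> = (\<Sum>i\<in>UNIV. F i (pd i \<phi>))"

lemma test_mult:
  assumes "test_fun f" "test_fun g" shows "test_fun (\<lambda>x. f x * g x)"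
proof -
  have "S (\<lambda>x. f x * g x)" using assms by (intro S.mult test_S)
  moreover have "supp (\<lambda>x. f x * g x) \<subseteq> supp f"
    by (rule supp_sub) (auto intro: in_supp simp: closed_supp)
  moreover have "compact (supp f)" using assms(1) unfolding test_fun_def by blast
  ultimately show ?thesis using S_test compact_sub[OF _ closed_supp] by blast
qed

lemma test_add:
  assumes "test_fun f" "test_fun g" shows "test_fun (\<lambda>x. f x + g x)"
proof -
  have "S (\<lambda>x. f x + g x)" using assms by (intro S.add test_S)
  moreover have "supp (\<lambda>x. f x + g x) \<subseteq> supp f \<union> supp g"
  proof (rule supp_sub)
    fix x assume "f x + g x \<noteq> 0"
    then have "f x \<noteq> 0 \<or> g x \<noteq> 0" by auto
    then show "x \<in> supp f \<union> supp g" using in_supp by blast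
  qed (simp add: closed_supp closed_Un)
  moreover have "compact (supp f \<union> supp g)" using assms unfolding test_fun_def by blast
  ultimately show ?thesis using S_test compact_sub[OF _ closed_supp] by blast
qed

lemma test_cmult:
  assumes "test_fun f" shows "test_fun (\<lambda>x. c * f x)"
proof -
  have "S (\<lambda>x. c * f x)" using assms by (intro S.mult S.const test_S)
  moreover have "supp (\<lambda>x. c * f x) \<subseteq> supp f"
    by (rule supp_sub) (auto intro: in_supp simp: closed_supp)
  moreover have "compact (supp f)" using assms(1) unfolding test_fun_def by blast
  ultimately show ?thesis using S_test compact_sub[OF _ closed_supp] by blast
qed

lemma dist_add:
  assumes "distribution T" "test_fun \<phi>" "test_fun \<psi>"
  shows "T (\<lambda>x. \<phi> x + \<psi> x) = T \<phi> + T \<psi>"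
proof -
  have "\<forall>\<phi> \<psi>. test_fun \<phi> \<longrightarrow> test_fun \<psi> \<longrightarrow> T (\<lambda>x. \<phi> x + \<psi> x) = T \<phi> + T \<psi>"
    using assms(1) unfolding distribution_def by (rule conjunct1)
  then show ?thesis using assms(2,3) by simp
qed

lemma dist_cmult:
  assumes "distribution T" "test_fun \<phi>"
  shows "T (\<lambda>x. c * \<phi> x) = c * T \<phi>"
proof -
  have "\<forall>\<phi> c. test_fun \<phi> \<longrightarrow> T (\<lambda>x. c * \<phi> x) = c * T \<phi>"
    using assms(1) unfolding distribution_def by (rule conjunct1[OF conjunct2])
  then show ?thesis using assms(2) by simp
qed

lemma TT_add:
  assumes "\<forall>i. distribution (F i)" "test_fun f" "test_fun g"
  shows "TT F (\<lambda>x. f x + g x) = TT F f + TT F g"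
proof -
  have e: "pd i (\<lambda>x. f x + g x) = (\<lambda>x. pd i f x + pd i g x)" for i
    by (rule ext) (rule pd_add[OF test_diff[OF assms(2)] test_diff[OF assms(3)]])
  have "F i (\<lambda>x. pd i f x + pd i g x) = F i (pd i f) + F i (pd i g)" for i
    using assms(1) test_pd[OF assms(2)] test_pd[OF assms(3)] dist_add by blast
  then show ?thesis unfolding TT_def e by (simp add: sum.distrib)
qed

lemma TT_cmult:
  assumes "\<forall>i. distribution (F i)" "test_fun f"
  shows "TT F (\<lambda>x. c * f x) = c * TT F f"
proof -
  have e: "pd i (\<lambda>x. c * f x) = (\<lambda>x. c * pd i f x)" for i
    by (rule ext) (rule pd_cmult[OF test_diff[OF assms(2)]])
  have "F i (\<lambda>x. c * pd i f x) = c * F i (pd i f)" for i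
    using assms(1) test_pd[OF assms(2)] dist_cmult by blast
  then show ?thesis unfolding TT_def e by (simp add: sum_distrib_left)
qed

lemma Hd_lin_bound:
  assumes "\<And>i. pd i f x = \<alpha> * pd i g x + \<beta> * pd i h x" "cmod \<alpha> \<le> M"
  shows "Hd f x \<le> 2 * M^2 * Hd g x + 2 * (cmod \<beta>)^2 * Hd h x"
proof -
  have "(cmod (pd i f x))^2 \<le> 2 * M^2 * (cmod (pd i g x))^2 + 2 * (cmod \<beta>)^2 * (cmod (pd i h x))^2" for i
  proof -
    have "(cmod (pd i f x))^2 \<le> 2 * (cmod (\<alpha> * pd i g x))^2 + 2 * (cmod (\<beta> * pd i h x))^2"
      unfolding assms(1) by (rule sq_sum_le)
    also have "(cmod (\<alpha> * pd i g x))^2 \<le> M^2 * (cmod (pd i g x))^2"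
      unfolding norm_mult power_mult_distrib using assms(2)
      by (intro mult_right_mono power_mono) auto
    finally show ?thesis by (simp add: norm_mult power_mult_distrib)
  qed
  then have "Hd f x \<le> (\<Sum>i\<in>UNIV. 2 * M^2 * (cmod (pd i g x))^2 + 2 * (cmod \<beta>)^2 * (cmod (pd i h x))^2)"
    unfolding Hd_def by (rule sum_mono)
  also have "\<dots> = 2 * M^2 * Hd g x + 2 * (cmod \<beta>)^2 * Hd h x"
    unfolding Hd_def by (simp add: sum.distrib sum_distrib_left)
  finally show ?thesis .
qed

lemma core_eps:
  fixes F :: "'n::finite \<Rightarrow> ((real^'n \<Rightarrow> complex) \<Rightarrow> complex)" and w \<eta> :: "real^'n \<Rightarrow> complex"
  assumes dF: "\<forall>i. distribution (F i)"
    and hyp: "\<forall>u v. test_fun u \<longrightarrow> test_fun v \<longrightarrow>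
           cmod (\<Sum>i\<in>UNIV. F i (\<lambda>x. v x * pd i (\<lambda>y. cnj (u y)) x - cnj (u x) * pd i v x))
             \<le> C * H1_norm u * H1_norm v"
    and C: "C > 0"
    and tw: "test_fun w" and rw: "\<forall>x. Im (w x) = 0"
    and te: "test_fun \<eta>" and eta1: "\<forall>x\<in>supp w. \<eta> x = 1"
    and e: "e > 0"
  shows "cmod (TT F (\<lambda>x. w x * w x) + (2 * \<i> * complex_of_real e) * TT F w)
     \<le> C * (4 * exp pi ^ 2 * H1_norm w ^ 2 + 2 * e^2 * exp pi ^ 2 * H1_norm \<eta> ^ 2)"
proof -
  define E where "E = exp pi"
  define z where "z = (\<lambda>x. w x + \<i> * complex_of_real e)"
  define P0 where "P0 = (\<i> * complex_of_real e) powr (1 + \<i>)"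
  define Q0 where "Q0 = (- \<i>) * (\<i> * complex_of_real e) powr (1 - \<i>)"
  define a where "a = (\<lambda>x. z x powr (1 + \<i>) + (- P0) + P0 * \<eta> x)"
  define b where "b = (\<lambda>x. (- \<i>) * z x powr (1 - \<i>) + (- Q0) + Q0 * \<eta> x)"
  have Imz: "Im (z x) = e" for x using rw by (simp add: z_def)
  have zne: "z x \<noteq> 0" for x using Imz[of x] e by auto
  have znp: "z x \<notin> \<real>\<^sub>\<le>\<^sub>0" for x using Im_pos_nonpos Imz e by simp
  have Sz: "S z" unfolding z_def by (intro S.add S.const test_S tw)
  have Szp: "S (\<lambda>x. z x powr w')" for w' by (rule S.pw[OF Sz]) (simp add: Imz e)
  have Sa1: "S (\<lambda>x. z x powr (1 + \<i>) + (- P0))" by (intro S.add S.const Szp)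
  have Sa2: "S (\<lambda>x. P0 * \<eta> x)" by (intro S.mult S.const test_S te)
  have Sb1: "S (\<lambda>x. (- \<i>) * z x powr (1 - \<i>) + (- Q0))" by (intro S.add S.mult S.const Szp)
  have Sb2: "S (\<lambda>x. Q0 * \<eta> x)" by (intro S.mult S.const test_S te)
  have Sa: "S a" unfolding a_def by (rule S.add[OF Sa1 Sa2])
  have Sb: "S b" unfolding b_def by (rule S.add[OF Sb1 Sb2])
  have zero_out: "w x = 0 \<and> \<eta> x = 0" if "x \<notin> supp w \<union> supp \<eta>" for x
    using that notin_supp by blast
  have cpt: "compact (supp w \<union> supp \<eta>)" using tw te unfolding test_fun_def by blast
  have ta: "test_fun a"
  proof -
    have "supp a \<subseteq> supp w \<union> supp \<eta>"
    proof (rule supp_sub)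
      fix x assume "a x \<noteq> 0"
      show "x \<in> supp w \<union> supp \<eta>"
      proof (rule ccontr)
        assume "x \<notin> supp w \<union> supp \<eta>"
        then have "w x = 0" "\<eta> x = 0" using notin_supp by auto
        then have "a x = 0" by (simp add: a_def z_def P0_def)
        with \<open>a x \<noteq> 0\<close> show False by simp
      qed
    qed (simp add: closed_supp closed_Un)
    then show ?thesis using S_test[OF Sa] compact_sub[OF cpt closed_supp] by blast
  qed
  have tb: "test_fun b"
  proof -
    have "supp b \<subseteq> supp w \<union> supp \<eta>"
    proof (rule supp_sub)
      fix x assume "b x \<noteq> 0"
      show "x \<in> supp w \<union> supp \<eta>"
      proof (rule ccontr)
        assume "x \<notin> supp w \<union> supp \<eta>"
        then have "w x = 0" "\<eta> x = 0" using notin_supp by auto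
        then have "b x = 0" by (simp add: b_def z_def Q0_def)
        with \<open>b x \<noteq> 0\<close> show False by simp
      qed
    qed (simp add: closed_supp closed_Un)
    then show ?thesis using S_test[OF Sb] compact_sub[OF cpt closed_supp] by blast
  qed
  have dw: "w differentiable (at x)" for x by (rule test_diff[OF tw])
  have de: "\<eta> differentiable (at x)" for x by (rule test_diff[OF te])
  have dz: "z differentiable (at x)" for x using S_main[OF Sz] by blast
  have dzp: "(\<lambda>x. z x powr w') differentiable (at x)" for x w' using S_main[OF Szp] by blast
  have pz: "pd i z x = pd i w x" for i x
  proof -
    have "pd i (\<lambda>x. w x + \<i> * complex_of_real e) x = pd i w x + pd i (\<lambda>x. \<i> * complex_of_real e) x"
      by (rule pd_add[OF dw differentiable_const])
    then show ?thesis by (simp add: z_def pd_const)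
  qed
  have pzp: "pd i (\<lambda>x. z x powr w') x = (w' * z x powr (w' - 1)) * pd i w x" for i x w'
    using pd_holo[OF dz has_field_derivative_powr[OF znp]] pz by simp
  have pa: "pd i a x = ((1 + \<i>) * z x powr \<i>) * pd i w x + P0 * pd i \<eta> x" for i x
  proof -
    have d1: "(\<lambda>x. z x powr (1 + \<i>) + (- P0)) differentiable (at x)" using S_main[OF Sa1] by blast
    have d2: "(\<lambda>x. P0 * \<eta> x) differentiable (at x)" using S_main[OF Sa2] by blast
    have "pd i a x = pd i (\<lambda>x. z x powr (1 + \<i>) + (- P0)) x + pd i (\<lambda>x. P0 * \<eta> x) x"
      unfolding a_def by (rule pd_add[OF d1 d2])
    also have "pd i (\<lambda>x. z x powr (1 + \<i>) + (- P0)) x = pd i (\<lambda>x. z x powr (1 + \<i>)) x"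
    proof -
      have "pd i (\<lambda>x. z x powr (1 + \<i>) + (- P0)) x = pd i (\<lambda>x. z x powr (1 + \<i>)) x + pd i (\<lambda>x. - P0) x"
        by (rule pd_add[OF dzp differentiable_const])
      then show ?thesis by (simp add: pd_const)
    qed
    also have "pd i (\<lambda>x. P0 * \<eta> x) x = P0 * pd i \<eta> x" by (rule pd_cmult[OF de])
    finally show ?thesis using pzp by simp
  qed
  have pb: "pd i b x = ((- \<i>) * ((1 - \<i>) * z x powr (- \<i>))) * pd i w x + Q0 * pd i \<eta> x" for i x
  proof -
    have d1: "(\<lambda>x. (- \<i>) * z x powr (1 - \<i>) + (- Q0)) differentiable (at x)" using S_main[OF Sb1] by blast
    have d2: "(\<lambda>x. Q0 * \<eta> x) differentiable (at x)" using S_main[OF Sb2] by blast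
    have d3: "(\<lambda>x. (- \<i>) * z x powr (1 - \<i>)) differentiable (at x)"
      using S_main[OF S.mult[OF S.const Szp]] by blast
    have "pd i b x = pd i (\<lambda>x. (- \<i>) * z x powr (1 - \<i>) + (- Q0)) x + pd i (\<lambda>x. Q0 * \<eta> x) x"
      unfolding b_def by (rule pd_add[OF d1 d2])
    also have "pd i (\<lambda>x. (- \<i>) * z x powr (1 - \<i>) + (- Q0)) x = pd i (\<lambda>x. (- \<i>) * z x powr (1 - \<i>)) x"
    proof -
      have "pd i (\<lambda>x. (- \<i>) * z x powr (1 - \<i>) + (- Q0)) x = pd i (\<lambda>x. (- \<i>) * z x powr (1 - \<i>)) x + pd i (\<lambda>x. - Q0) x"
        by (rule pd_add[OF d3 differentiable_const])
      then show ?thesis by (simp add: pd_const)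
    qed
    also have "\<dots> = (- \<i>) * pd i (\<lambda>x. z x powr (1 - \<i>)) x" by (rule pd_cmult[OF dzp])
    also have "pd i (\<lambda>x. Q0 * \<eta> x) x = Q0 * pd i \<eta> x" by (rule pd_cmult[OF de])
    finally show ?thesis using pzp by (simp add: algebra_simps)
  qed
  have pw_id: "b x * pd i a x - a x * pd i b x = 2 * z x * pd i w x" for i x
  proof (cases "\<eta> x = 1")
    case True
    have ab: "a x = z x powr (1 + \<i>)" "b x = (- \<i>) * z x powr (1 - \<i>)"
      by (simp_all add: a_def b_def True)
    have alt: "pd i \<eta> x = 0 \<or> (z x powr (1 + \<i>) = P0 \<and> (- \<i>) * z x powr (1 - \<i>) = Q0)"
    proof (cases "w x = 0")
      case True
      then have "z x = \<i> * complex_of_real e" by (simp add: z_def)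
      then show ?thesis by (simp add: P0_def Q0_def)
    next
      case False
      have "open {y. w y \<noteq> 0}" by (rule open_nonzero) (rule dw)
      moreover have "\<And>y. y \<in> {y. w y \<noteq> 0} \<Longrightarrow> \<eta> y = 1" using eta1 in_supp by blast
      ultimately have "pd i \<eta> x = 0" using False by (intro pd_locconst[of "{y. w y \<noteq> 0}"]) auto
      then show ?thesis by simp
    qed
    have W: "(- \<i>) * z x powr (1 - \<i>) * ((1 + \<i>) * z x powr \<i>) - z x powr (1 + \<i>) * ((- \<i>) * (1 - \<i>) * z x powr (- \<i>)) = 2 * z x"
      by (rule W_ident[OF zne])
    have "b x * pd i a x - a x * pd i b x
      = ((- \<i>) * z x powr (1 - \<i>) * ((1 + \<i>) * z x powr \<i>) - z x powr (1 + \<i>) * ((- \<i>) * (1 - \<i>) * z x powr (- \<i>))) * pd i w x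
        + ((- \<i>) * z x powr (1 - \<i>) * P0 - z x powr (1 + \<i>) * Q0) * pd i \<eta> x"
      unfolding ab pa pb by (simp add: algebra_simps)
    also have "((- \<i>) * z x powr (1 - \<i>) * P0 - z x powr (1 + \<i>) * Q0) * pd i \<eta> x = 0"
      using alt by (auto simp: algebra_simps)
    finally show ?thesis using W by simp
  next
    case False
    then have "x \<notin> supp w" using eta1 by blast
    then have w0: "w x = 0" "pd i w x = 0" by (simp_all add: notin_supp pd_notin_supp)
    have "z x = \<i> * complex_of_real e" using w0 by (simp add: z_def)
    then have ab: "a x = P0 * \<eta> x" "b x = Q0 * \<eta> x" by (simp_all add: a_def b_def P0_def Q0_def)
    show ?thesis unfolding ab pa pb w0 by (simp add: algebra_simps)
  qed
  have fun_eq: "(\<lambda>x. b x * pd i a x - a x * pd i b x) = (\<lambda>x. pd i (\<lambda>x. w x * w x) x + (2 * \<i> * complex_of_real e) * pd i w x)" for i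
  proof (rule ext)
    fix x
    have "pd i (\<lambda>x. w x * w x) x = w x * pd i w x + pd i w x * w x" by (rule pd_mult[OF dw dw])
    then show "b x * pd i a x - a x * pd i b x = pd i (\<lambda>x. w x * w x) x + (2 * \<i> * complex_of_real e) * pd i w x"
      unfolding pw_id by (simp add: z_def algebra_simps)
  qed
  have tww: "test_fun (\<lambda>x. w x * w x)" by (rule test_mult[OF tw tw])
  have Fsplit: "F i (\<lambda>x. b x * pd i a x - a x * pd i b x) = F i (pd i (\<lambda>x. w x * w x)) + (2 * \<i> * complex_of_real e) * F i (pd i w)" for i
  proof -
    have "F i (\<lambda>x. pd i (\<lambda>x. w x * w x) x + (2 * \<i> * complex_of_real e) * pd i w x)
        = F i (pd i (\<lambda>x. w x * w x)) + F i (\<lambda>x. (2 * \<i> * complex_of_real e) * pd i w x)"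
      using dist_add[OF spec[OF dF] test_pd[OF tww] test_cmult[OF test_pd[OF tw]]] by simp
    also have "F i (\<lambda>x. (2 * \<i> * complex_of_real e) * pd i w x) = (2 * \<i> * complex_of_real e) * F i (pd i w)"
      by (rule dist_cmult[OF spec[OF dF] test_pd[OF tw]])
    finally show ?thesis unfolding fun_eq .
  qed
  have sum_eq: "(\<Sum>i\<in>UNIV. F i (\<lambda>x. b x * pd i a x - a x * pd i b x)) = TT F (\<lambda>x. w x * w x) + (2 * \<i> * complex_of_real e) * TT F w"
    unfolding Fsplit TT_def by (simp add: sum.distrib sum_distrib_left)
  have h0: "cmod (\<Sum>i\<in>UNIV. F i (\<lambda>x. b x * pd i (\<lambda>y. cnj (cnj (a y))) x - cnj (cnj (a x)) * pd i b x))
             \<le> C * H1_norm (\<lambda>y. cnj (a y)) * H1_norm b"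
    using hyp test_cnj[OF ta] tb by blast
  have h1: "cmod (TT F (\<lambda>x. w x * w x) + (2 * \<i> * complex_of_real e) * TT F w) \<le> C * H1_norm a * H1_norm b"
    using h0 unfolding complex_cnj_cnj H1_cnj[OF ta] sum_eq by simp
  define Qv where "Qv = 4 * E ^ 2 * H1_norm w ^ 2 + 2 * e^2 * E ^ 2 * H1_norm \<eta> ^ 2"
  have Qv0: "Qv \<ge> 0" unfolding Qv_def by simp
  have s2: "cmod (1 + \<i>) = sqrt 2" "cmod (1 - \<i>) = sqrt 2" by (simp_all add: cmod_def)
  have zi: "cmod (z x powr \<i>) \<le> E" for x using cmod_powr_le[OF zne, of x \<i>] by (simp add: E_def)
  have zmi: "cmod (z x powr (- \<i>)) \<le> E" for x using cmod_powr_le[OF zne, of x "- \<i>"] by (simp add: E_def)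
  have ie: "\<i> * complex_of_real e \<noteq> 0" "cmod (\<i> * complex_of_real e) = e" using e by (auto simp: norm_mult)
  have P0b: "cmod P0 \<le> e * E"
  proof -
    have "cmod P0 \<le> exp (ln e + pi)" using cmod_powr_le[OF ie(1), of "1 + \<i>"] ie(2) by (simp add: P0_def)
    also have "\<dots> = e * E" using e by (simp add: exp_add E_def)
    finally show ?thesis .
  qed
  have Q0b: "cmod Q0 \<le> e * E"
  proof -
    have "cmod Q0 \<le> exp (ln e + pi)" using cmod_powr_le[OF ie(1), of "1 - \<i>"] ie(2) by (simp add: Q0_def norm_mult)
    also have "\<dots> = e * E" using e by (simp add: exp_add E_def)
    finally show ?thesis .
  qed
  have E0: "E > 0" by (simp add: E_def)
  have Hda: "Hd a x \<le> 4 * E^2 * Hd w x + 2 * e^2 * E^2 * Hd \<eta> x" for x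
  proof -
    have "cmod ((1 + \<i>) * z x powr \<i>) \<le> sqrt 2 * E" using zi[of x] s2 by (simp add: norm_mult mult_left_mono)
    then have "Hd a x \<le> 2 * (sqrt 2 * E)^2 * Hd w x + 2 * (cmod P0)^2 * Hd \<eta> x"
      by (rule Hd_lin_bound[OF pa])
    also have "(cmod P0)^2 \<le> (e * E)^2" using P0b by (simp add: power_mono)
    then have "2 * (cmod P0)^2 * Hd \<eta> x \<le> 2 * (e * E)^2 * Hd \<eta> x" using mult_right_mono[OF _ Hd_nonneg[of \<eta> x]] by simp
    then have "2 * (sqrt 2 * E)^2 * Hd w x + 2 * (cmod P0)^2 * Hd \<eta> x \<le> 4 * E^2 * Hd w x + 2 * e^2 * E^2 * Hd \<eta> x"
      by (simp add: power_mult_distrib)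
    finally show ?thesis .
  qed
  have Hdb: "Hd b x \<le> 4 * E^2 * Hd w x + 2 * e^2 * E^2 * Hd \<eta> x" for x
  proof -
    have "cmod ((- \<i>) * ((1 - \<i>) * z x powr (- \<i>))) \<le> sqrt 2 * E" using zmi[of x] s2 by (simp add: norm_mult mult_left_mono)
    then have "Hd b x \<le> 2 * (sqrt 2 * E)^2 * Hd w x + 2 * (cmod Q0)^2 * Hd \<eta> x"
      by (rule Hd_lin_bound[OF pb])
    also have "(cmod Q0)^2 \<le> (e * E)^2" using Q0b by (simp add: power_mono)
    then have "2 * (cmod Q0)^2 * Hd \<eta> x \<le> 2 * (e * E)^2 * Hd \<eta> x" using mult_right_mono[OF _ Hd_nonneg[of \<eta> x]] by simp
    then have "2 * (sqrt 2 * E)^2 * Hd w x + 2 * (cmod Q0)^2 * Hd \<eta> x \<le> 4 * E^2 * Hd w x + 2 * e^2 * E^2 * Hd \<eta> x"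
      by (simp add: power_mult_distrib)
    finally show ?thesis .
  qed
  have Ha: "H1_norm a ^ 2 \<le> Qv" unfolding Qv_def
    by (rule H1_bound[OF ta tw te]) (use Hda in auto)
  have Hb: "H1_norm b ^ 2 \<le> Qv" unfolding Qv_def
    by (rule H1_bound[OF tb tw te]) (use Hdb in auto)
  have "H1_norm a \<le> sqrt Qv" using Ha H1_nonneg[of a] real_le_rsqrt by blast
  moreover have "H1_norm b \<le> sqrt Qv" using Hb H1_nonneg[of b] real_le_rsqrt by blast
  ultimately have "H1_norm a * H1_norm b \<le> sqrt Qv * sqrt Qv"
    using H1_nonneg[of a] H1_nonneg[of b] using Qv0 by (intro mult_mono) auto
  also have "\<dots> = Qv" using Qv0 by simp
  finally have "C * (H1_norm a * H1_norm b) \<le> C * Qv" using C by (simp add: mult_left_mono)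
  then show ?thesis using h1 unfolding Qv_def E_def by (simp add: mult.assoc)
qed

lemma quad:
  fixes F :: "'n::finite \<Rightarrow> ((real^'n \<Rightarrow> complex) \<Rightarrow> complex)" and w :: "real^'n \<Rightarrow> complex"
  assumes dF: "\<forall>i. distribution (F i)"
    and hyp: "\<forall>u v. test_fun u \<longrightarrow> test_fun v \<longrightarrow>
           cmod (\<Sum>i\<in>UNIV. F i (\<lambda>x. v x * pd i (\<lambda>y. cnj (u y)) x - cnj (u x) * pd i v x))
             \<le> C * H1_norm u * H1_norm v"
    and C: "C > 0"
    and tw: "test_fun w" and rw: "\<forall>x. Im (w x) = 0"
  shows "cmod (TT F (\<lambda>x. w x * w x)) \<le> (4 * C * exp pi ^ 2) * H1_norm w ^ 2"
proof -
  have "compact (supp w)" using tw unfolding test_fun_def by blast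
  then obtain \<eta> where te: "test_fun \<eta>" and eta1: "\<forall>x\<in>supp w. \<eta> x = 1"
    using bump_exists by blast
  let ?X = "H1_norm w ^ 2" and ?Y = "H1_norm \<eta> ^ 2" and ?E = "exp pi"
  show ?thesis
  proof (rule eps_limit[where P = "2 * cmod (TT F w)" and Q = "2 * C * ?E^2 * ?Y"])
    show "2 * cmod (TT F w) \<ge> 0" by simp
    show "2 * C * ?E^2 * ?Y \<ge> 0" using C by simp
    fix e :: real assume e: "0 < e" "e \<le> 1"
    have core: "cmod (TT F (\<lambda>x. w x * w x) + (2 * \<i> * complex_of_real e) * TT F w)
       \<le> C * (4 * ?E ^ 2 * ?X + 2 * e^2 * ?E ^ 2 * ?Y)"
      by (rule core_eps[OF dF hyp C tw rw te eta1 e(1)])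
    have "cmod (TT F (\<lambda>x. w x * w x)) = cmod ((TT F (\<lambda>x. w x * w x) + (2 * \<i> * complex_of_real e) * TT F w) - (2 * \<i> * complex_of_real e) * TT F w)"
      by simp
    also have "\<dots> \<le> cmod (TT F (\<lambda>x. w x * w x) + (2 * \<i> * complex_of_real e) * TT F w) + cmod ((2 * \<i> * complex_of_real e) * TT F w)"
      by (rule norm_triangle_ineq4)
    also have "cmod ((2 * \<i> * complex_of_real e) * TT F w) = e * (2 * cmod (TT F w))"
      using e by (simp add: norm_mult)
    finally show "cmod (TT F (\<lambda>x. w x * w x)) \<le> 4 * C * ?E ^ 2 * ?X + e * (2 * cmod (TT F w)) + e^2 * (2 * C * ?E^2 * ?Y)"
      using core by (simp add: algebra_simps)
  qed
qed

lemma test_re: "test_fun f \<Longrightarrow> test_fun (\<lambda>x. complex_of_real (Re (f x)))"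
proof -
  assume t: "test_fun f"
  have "S (\<lambda>x. complex_of_real (Re (f x)))" using t by (intro S.re test_S)
  moreover have "supp (\<lambda>x. complex_of_real (Re (f x))) \<subseteq> supp f"
  proof (rule supp_sub)
    fix x assume "complex_of_real (Re (f x)) \<noteq> 0"
    then have "f x \<noteq> 0" by auto
    then show "x \<in> supp f" by (rule in_supp)
  qed (simp add: closed_supp)
  moreover have "compact (supp f)" using t unfolding test_fun_def by blast
  ultimately show ?thesis using S_test compact_sub[OF _ closed_supp] by blast
qed

lemma bilin:
  fixes F :: "'n::finite \<Rightarrow> ((real^'n \<Rightarrow> complex) \<Rightarrow> complex)" and f g :: "real^'n \<Rightarrow> complex"
  assumes dF: "\<forall>i. distribution (F i)"
    and quadb: "\<And>w. test_fun w \<Longrightarrow> (\<forall>x. Im (w x) = 0) \<Longrightarrow> cmod (TT F (\<lambda>x. w x * w x)) \<le> K0 * H1_norm w ^ 2"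
    and K0: "K0 \<ge> 0"
    and tf: "test_fun f" and rf: "\<forall>x. Im (f x) = 0"
    and tg: "test_fun g" and rg: "\<forall>x. Im (g x) = 0"
  shows "cmod (TT F (\<lambda>x. f x * g x)) \<le> 2 * K0 * H1_norm f * H1_norm g"
proof (rule t_opt[OF K0 H1_nonneg H1_nonneg])
  fix t :: real assume t: "t > 0"
  define c where "c = complex_of_real t"
  define d where "d = complex_of_real (1 / t)"
  have cd: "c * d = 1" using t by (simp add: c_def d_def of_real_mult[symmetric])
  have nc: "cmod c = t" "cmod d = 1 / t" "cmod (- d) = 1 / t" using t by (simp_all add: c_def d_def norm_divide)
  define s1 where "s1 = (\<lambda>x. c * f x + d * g x)"
  define s2 where "s2 = (\<lambda>x. c * f x + (- d) * g x)"
  have t1: "test_fun s1" unfolding s1_def by (intro test_add test_cmult tf tg)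
  have t2: "test_fun s2" unfolding s2_def by (intro test_add test_cmult tf tg)
  have r1: "\<forall>x. Im (s1 x) = 0" using rf rg by (simp add: s1_def c_def d_def)
  have r2: "\<forall>x. Im (s2 x) = 0" using rf rg by (simp add: s2_def c_def d_def)
  have tfg: "test_fun (\<lambda>x. f x * g x)" by (rule test_mult[OF tf tg])
  have tss: "test_fun (\<lambda>x. s2 x * s2 x)" by (rule test_mult[OF t2 t2])
  have eq: "(\<lambda>x. s1 x * s1 x) = (\<lambda>x. s2 x * s2 x + 4 * (f x * g x))"
  proof (rule ext)
    fix x
    have "(c * f x + d * g x) * (c * f x + d * g x) = (c * f x + (- d) * g x) * (c * f x + (- d) * g x) + 4 * (c * d) * (f x * g x)"
      by (simp add: algebra_simps)
    then show "s1 x * s1 x = s2 x * s2 x + 4 * (f x * g x)" unfolding s1_def s2_def cd by simp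
  qed
  have "TT F (\<lambda>x. s1 x * s1 x) = TT F (\<lambda>x. s2 x * s2 x) + 4 * TT F (\<lambda>x. f x * g x)"
    unfolding eq TT_add[OF dF tss test_cmult[OF tfg]] TT_cmult[OF dF tfg] ..
  then have "4 * TT F (\<lambda>x. f x * g x) = TT F (\<lambda>x. s1 x * s1 x) - TT F (\<lambda>x. s2 x * s2 x)" by simp
  then have "4 * cmod (TT F (\<lambda>x. f x * g x)) \<le> cmod (TT F (\<lambda>x. s1 x * s1 x)) + cmod (TT F (\<lambda>x. s2 x * s2 x))"
    by (metis norm_triangle_ineq4 norm_mult norm_numeral)
  also have "\<dots> \<le> K0 * H1_norm s1 ^ 2 + K0 * H1_norm s2 ^ 2"
    using quadb[OF t1 r1] quadb[OF t2 r2] by simp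
  also have "\<dots> \<le> K0 * (2 * t^2 * H1_norm f ^ 2 + 2 * (1/t)^2 * H1_norm g ^ 2) + K0 * (2 * t^2 * H1_norm f ^ 2 + 2 * (1/t)^2 * H1_norm g ^ 2)"
  proof -
    have pd1: "pd i s1 x = c * pd i f x + d * pd i g x" for i x
    proof -
      have "pd i s1 x = pd i (\<lambda>x. c * f x) x + pd i (\<lambda>x. d * g x) x"
        unfolding s1_def by (rule pd_add) (intro differentiable_mult differentiable_const test_diff tf tg)+
      then show ?thesis by (simp only: pd_cmult[OF test_diff[OF tf]] pd_cmult[OF test_diff[OF tg]])
    qed
    have pd2: "pd i s2 x = c * pd i f x + (- d) * pd i g x" for i x
    proof -
      have "pd i s2 x = pd i (\<lambda>x. c * f x) x + pd i (\<lambda>x. (- d) * g x) x"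
        unfolding s2_def by (rule pd_add) (intro differentiable_mult differentiable_const test_diff tf tg)+
      then show ?thesis by (simp only: pd_cmult[OF test_diff[OF tf]] pd_cmult[OF test_diff[OF tg]])
    qed
    have h1: "H1_norm s1 ^ 2 \<le> 2 * t^2 * H1_norm f ^ 2 + 2 * (1/t)^2 * H1_norm g ^ 2"
    proof (rule H1_bound[OF t1 tf tg])
      fix x show "Hd s1 x \<le> 2 * t^2 * Hd f x + 2 * (1/t)^2 * Hd g x"
        using Hd_lin_bound[OF pd1, of t] nc by simp
    qed auto
    have h2: "H1_norm s2 ^ 2 \<le> 2 * t^2 * H1_norm f ^ 2 + 2 * (1/t)^2 * H1_norm g ^ 2"
    proof (rule H1_bound[OF t2 tf tg])
      fix x show "Hd s2 x \<le> 2 * t^2 * Hd f x + 2 * (1/t)^2 * Hd g x"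
        using Hd_lin_bound[OF pd2, of t] nc by simp
    qed auto
    show ?thesis using h1 h2 K0 by (intro add_mono mult_left_mono) auto
  qed
  finally have h: "4 * cmod (TT F (\<lambda>x. f x * g x)) \<le> K0 * (2 * t^2 * H1_norm f ^ 2 + 2 * (1/t)^2 * H1_norm g ^ 2) + K0 * (2 * t^2 * H1_norm f ^ 2 + 2 * (1/t)^2 * H1_norm g ^ 2)" .
  have "K0 * (2 * t^2 * H1_norm f ^ 2 + 2 * (1/t)^2 * H1_norm g ^ 2) + K0 * (2 * t^2 * H1_norm f ^ 2 + 2 * (1/t)^2 * H1_norm g ^ 2)
      = 4 * (K0 * (t^2 * H1_norm f ^ 2 + H1_norm g ^ 2 / t^2))"
    by (simp add: power_divide algebra_simps)
  then show "cmod (TT F (\<lambda>x. f x * g x)) \<le> K0 * (t^2 * H1_norm f ^ 2 + H1_norm g ^ 2 / t^2)"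
    using h by linarith
qed

lemma H1_re_le:
  assumes t: "test_fun u"
  shows "H1_norm (\<lambda>x. complex_of_real (Re (u x))) \<le> H1_norm u"
proof (rule H1_bound1[OF test_re[OF t] t])
  fix x
  have "(cmod (pd i (\<lambda>x. complex_of_real (Re (u x))) x))^2 \<le> (cmod (pd i u x))^2" for i
  proof -
    have "cmod (pd i (\<lambda>x. complex_of_real (Re (u x))) x) = \<bar>Re (pd i u x)\<bar>"
      using pd_re[OF test_diff[OF t]] by simp
    also have "\<dots> \<le> cmod (pd i u x)" by (rule abs_Re_le_cmod)
    finally show ?thesis by (simp add: power_mono)
  qed
  then show "Hd (\<lambda>x. complex_of_real (Re (u x))) x \<le> Hd u x"
    unfolding Hd_def by (rule sum_mono)
qed

lemma H1_cmult_eq: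
  assumes t: "test_fun u" and c: "cmod c = 1"
  shows "H1_norm (\<lambda>x. c * u x) = H1_norm u"
proof -
  have "pd i (\<lambda>x. c * u x) x = c * pd i u x" for i x by (rule pd_cmult[OF test_diff[OF t]])
  then show ?thesis unfolding H1_norm_def using c by (simp add: norm_mult)
qed

lemma bilin_complex:
  fixes F :: "'n::finite \<Rightarrow> ((real^'n \<Rightarrow> complex) \<Rightarrow> complex)"
  assumes dF: "\<forall>i. distribution (F i)"
    and bl: "\<And>f g. test_fun f \<Longrightarrow> (\<forall>x. Im (f x) = 0) \<Longrightarrow> test_fun g \<Longrightarrow> (\<forall>x. Im (g x) = 0) \<Longrightarrow>
        cmod (TT F (\<lambda>x. f x * g x)) \<le> K1 * H1_norm f * H1_norm g"
    and K1: "K1 \<ge> 0"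
    and tu: "test_fun u" and tv: "test_fun v"
  shows "cmod (TT F (\<lambda>x. u x * v x)) \<le> (4 * K1) * H1_norm u * H1_norm v"
proof -
  define u1 where "u1 = (\<lambda>x. complex_of_real (Re (u x)))"
  define u2 where "u2 = (\<lambda>x. complex_of_real (Re ((- \<i>) * u x)))"
  define v1 where "v1 = (\<lambda>x. complex_of_real (Re (v x)))"
  define v2 where "v2 = (\<lambda>x. complex_of_real (Re ((- \<i>) * v x)))"
  have tu1: "test_fun u1" unfolding u1_def by (rule test_re[OF tu])
  have tu2: "test_fun u2" unfolding u2_def by (rule test_re[OF test_cmult[OF tu]])
  have tv1: "test_fun v1" unfolding v1_def by (rule test_re[OF tv])
  have tv2: "test_fun v2" unfolding v2_def by (rule test_re[OF test_cmult[OF tv]])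
  have ru1: "\<forall>x. Im (u1 x) = 0" "\<forall>x. Im (u2 x) = 0" "\<forall>x. Im (v1 x) = 0" "\<forall>x. Im (v2 x) = 0"
    by (simp_all add: u1_def u2_def v1_def v2_def)
  have Hu1: "H1_norm u1 \<le> H1_norm u" unfolding u1_def by (rule H1_re_le[OF tu])
  have Hu2: "H1_norm u2 \<le> H1_norm u"
    using H1_re_le[OF test_cmult[OF tu], of "- \<i>"] H1_cmult_eq[OF tu, of "- \<i>"] unfolding u2_def by simp
  have Hv1: "H1_norm v1 \<le> H1_norm v" unfolding v1_def by (rule H1_re_le[OF tv])
  have Hv2: "H1_norm v2 \<le> H1_norm v"
    using H1_re_le[OF test_cmult[OF tv], of "- \<i>"] H1_cmult_eq[OF tv, of "- \<i>"] unfolding v2_def by simp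
  have b: "cmod (TT F (\<lambda>x. f x * g x)) \<le> K1 * H1_norm u * H1_norm v"
    if "f = u1 \<or> f = u2" "g = v1 \<or> g = v2" for f g
  proof -
    have tf: "test_fun f" "\<forall>x. Im (f x) = 0" "H1_norm f \<le> H1_norm u"
      using that(1) tu1 tu2 ru1 Hu1 Hu2 by auto
    have tg: "test_fun g" "\<forall>x. Im (g x) = 0" "H1_norm g \<le> H1_norm v"
      using that(2) tv1 tv2 ru1 Hv1 Hv2 by auto
    have "cmod (TT F (\<lambda>x. f x * g x)) \<le> K1 * H1_norm f * H1_norm g" by (rule bl[OF tf(1,2) tg(1,2)])
    also have "\<dots> \<le> K1 * H1_norm u * H1_norm v"
      using tf(3) tg(3) K1 H1_nonneg[of f] H1_nonneg[of g]
      by (simp add: mult.assoc mult_left_mono mult_mono)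
    finally show ?thesis .
  qed
  have decomp: "(\<lambda>x. u x * v x) = (\<lambda>x. u1 x * v1 x + ((-1) * (u2 x * v2 x) + (\<i> * (u1 x * v2 x) + \<i> * (u2 x * v1 x))))"
  proof (rule ext)
    fix x
    have "u x = u1 x + \<i> * u2 x" "v x = v1 x + \<i> * v2 x"
      by (simp_all add: u1_def u2_def v1_def v2_def complex_eq_iff)
    then show "u x * v x = u1 x * v1 x + ((-1) * (u2 x * v2 x) + (\<i> * (u1 x * v2 x) + \<i> * (u2 x * v1 x)))"
      by (simp add: algebra_simps)
  qed
  have t11: "test_fun (\<lambda>x. u1 x * v1 x)" by (rule test_mult[OF tu1 tv1])
  have t22: "test_fun (\<lambda>x. u2 x * v2 x)" by (rule test_mult[OF tu2 tv2])
  have t12: "test_fun (\<lambda>x. u1 x * v2 x)" by (rule test_mult[OF tu1 tv2])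
  have t21: "test_fun (\<lambda>x. u2 x * v1 x)" by (rule test_mult[OF tu2 tv1])
  have tB: "test_fun (\<lambda>x. (-1) * (u2 x * v2 x))" by (rule test_cmult[OF t22])
  have tC: "test_fun (\<lambda>x. \<i> * (u1 x * v2 x))" by (rule test_cmult[OF t12])
  have tD: "test_fun (\<lambda>x. \<i> * (u2 x * v1 x))" by (rule test_cmult[OF t21])
  have tCD: "test_fun (\<lambda>x. \<i> * (u1 x * v2 x) + \<i> * (u2 x * v1 x))" by (rule test_add[OF tC tD])
  have tBCD: "test_fun (\<lambda>x. (-1) * (u2 x * v2 x) + (\<i> * (u1 x * v2 x) + \<i> * (u2 x * v1 x)))"
    by (rule test_add[OF tB tCD])
  have e: "TT F (\<lambda>x. u x * v x) = TT F (\<lambda>x. u1 x * v1 x) + ((-1) * TT F (\<lambda>x. u2 x * v2 x)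
        + (\<i> * TT F (\<lambda>x. u1 x * v2 x) + \<i> * TT F (\<lambda>x. u2 x * v1 x)))"
    unfolding decomp TT_add[OF dF t11 tBCD] TT_add[OF dF tB tCD] TT_add[OF dF tC tD]
      TT_cmult[OF dF t22] TT_cmult[OF dF t12] TT_cmult[OF dF t21] ..
  have tri: "cmod (a + (b + (c + d))) \<le> cmod a + cmod b + cmod c + cmod d" for a b c d :: complex
    using norm_triangle_ineq[of a "b + (c + d)"] norm_triangle_ineq[of b "c + d"] norm_triangle_ineq[of c d]
    by linarith
  have "cmod (TT F (\<lambda>x. u x * v x)) \<le> cmod (TT F (\<lambda>x. u1 x * v1 x)) + cmod ((-1) * TT F (\<lambda>x. u2 x * v2 x))
        + cmod (\<i> * TT F (\<lambda>x. u1 x * v2 x)) + cmod (\<i> * TT F (\<lambda>x. u2 x * v1 x))"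
    unfolding e by (rule tri)
  also have "\<dots> = cmod (TT F (\<lambda>x. u1 x * v1 x)) + cmod (TT F (\<lambda>x. u2 x * v2 x))
        + cmod (TT F (\<lambda>x. u1 x * v2 x)) + cmod (TT F (\<lambda>x. u2 x * v1 x))"
    by (simp only: norm_mult norm_minus_cancel norm_one complex_i_not_zero) simp
  also have "\<dots> \<le> 4 * (K1 * H1_norm u * H1_norm v)"
    using b[of u1 v1] b[of u2 v2] b[of u1 v2] b[of u2 v1] by simp
  finally show ?thesis by (simp add: mult.assoc)
qed

theorem mainTheorem7:
  fixes F :: "'n::finite \<Rightarrow> ((real^'n \<Rightarrow> complex) \<Rightarrow> complex)"
    and f :: "(real^'n \<Rightarrow> complex) \<Rightarrow> complex"
    and C :: real
  assumes "CARD('n) \<ge> 3"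
    and "\<forall>i. distribution (F i)"
    and "C > 0"
    and "\<forall>u v. test_fun u \<longrightarrow> test_fun v \<longrightarrow>
           cmod (\<Sum>i\<in>UNIV. F i (\<lambda>x. v x * pd i (\<lambda>y. cnj (u y)) x - cnj (u x) * pd i v x))
             \<le> C * H1_norm u * H1_norm v"
    and "distribution f"
    and "\<forall>\<phi>. test_fun \<phi> \<longrightarrow> dist_lap f \<phi> = dist_div F \<phi>"
  shows "multiplier_H1 (dist_lap f)"
proof -
  note dF = assms(2) and hyp = assms(4) and C = assms(3)
  define K0 where "K0 = 4 * C * exp pi ^ 2"
  have K0: "K0 \<ge> 0" using C by (simp add: K0_def)
  have quadb: "cmod (TT F (\<lambda>x. w x * w x)) \<le> K0 * H1_norm w ^ 2"
    if "test_fun w" "\<forall>x. Im (w x) = 0" for w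
    unfolding K0_def by (rule quad[OF dF hyp C that])
  have bl: "cmod (TT F (\<lambda>x. f x * g x)) \<le> (2 * K0) * H1_norm f * H1_norm g"
    if "test_fun f" "\<forall>x. Im (f x) = 0" "test_fun g" "\<forall>x. Im (g x) = 0" for f g
    using bilin[OF dF quadb K0 that] by simp
  have K1: "2 * K0 \<ge> 0" using K0 by simp
  show ?thesis
    unfolding multiplier_H1_def
  proof (intro exI allI impI)
    fix u v :: "real^'n \<Rightarrow> complex"
    assume tu: "test_fun u" and tv: "test_fun v"
    have "dist_lap f (\<lambda>x. u x * v x) = dist_div F (\<lambda>x. u x * v x)"
      using assms(6) test_mult[OF tu tv] by blast
    also have "\<dots> = - TT F (\<lambda>x. u x * v x)" by (simp add: dist_div_def TT_def)
    finally have "cmod (dist_lap f (\<lambda>x. u x * v x)) = cmod (TT F (\<lambda>x. u x * v x))" by simp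
    also have "\<dots> \<le> (4 * (2 * K0)) * H1_norm u * H1_norm v"
      by (rule bilin_complex[OF dF bl K1 tu tv])
    finally show "cmod (dist_lap f (\<lambda>x. u x * v x)) \<le> (4 * (2 * K0)) * H1_norm u * H1_norm v" .
  qed
qed

end
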